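(* Let $|\psi\rangle\in\mathcal{H}$ be a normalized pure state and $\mathcal{N}=\{\mathcal{N}_k\}$ a non-trivial neighborhood structure. Suppose there exists a Hermitian operator of the form $\mathbb{W}=\sum_k\mathbb{W}_{\mathcal{N}_k}\otimes I_{\overline{\mathcal{N}}_k}$ (each $\mathbb{W}_{\mathcal{N}_k}$ acting on $\bigotimes_{a\in\mathcal{N}_k}\mathcal{H}_a$) such that $\langle\psi|\mathbb{W}|\psi\rangle<\langle\phi|\mathbb{W}|\phi\rangle$ for every normalized $|\phi\rangle\in\mathcal{H}_{\mathcal{N}}(|\psi\rangle)$ with $|\phi\rangle\langle\phi|\neq|\psi\rangle\langle\psi|$. Then $|\psi\rangle$ is UDA relative to $\mathcal{N}$.
   Context: $\mathcal{H}=\bigotimes_{a=1}^N\mathcal{H}_a$ is a finite-dimensional multipartite Hilbert space; $\mathcal{D}(\mathcal{H})$ is the set of density operators. A neighborhood is $\mathcal{N}_k\subsetneq\{1,\dots,N\}$, with complement $\overline{\mathcal{N}}_k$; a neighborhood structure is a finite collection of neighborhoods, non-trivial if every index lies in some neighborhood and each neighborhood intersects another. For a state $\rho$, $\rho_{\mathcal{N}_k}=\mathrm{tr}_{\overline{\mathcal{N}}_k}\rho$. The DQLS subspace of $|\psi\rangle$ is $\mathcal{H}_{\mathcal{N}}(|\psi\rangle)=\bigcap_k\mathrm{supp}(\rho_{\mathcal{N}_k}\otimes I_{\overline{\mathcal{N}}_k})$ with $\rho=|\psi\rangle\langle\psi|$. A state $\rho$ is UDA (uniquely determined among all states) relative to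 $\mathcal{N}$ if no $\sigma\in\mathcal{D}(\mathcal{H})$ with $\sigma\ne\rho$ has $\sigma_{\mathcal{N}_k}=\rho_{\mathcal{N}_k}$ for all $\mathcal{N}_k\in\mathcal{N}$. *)

theory Defs
  imports Complex_Main
begin

text \<open>Parties are 0..N-1, party a has local dimension d a. A computational basis
 state of the subsystem S is a configuration i :: nat => nat with i a < d a for a in S
 and i a = 0 outside S.\<close>

type_synonym cfg = "nat \<Rightarrow> nat"
type_synonym qop = "cfg \<Rightarrow> cfg \<Rightarrow> complex"

definition cfgs :: "(nat \<Rightarrow> nat) \<Rightarrow> nat set \<Rightarrow> cfg set" where
  "cfgs d S = {i. (\<forall>a\<in>S. i a < d a) \<and> (\<forall>a. a \<notin> S \<longrightarrow> i a = 0)}"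

definition restr :: "nat set \<Rightarrow> cfg \<Rightarrow> cfg" where
  "restr S i = (\<lambda>a. if a \<in> S then i a else 0)"

definition merge :: "nat set \<Rightarrow> cfg \<Rightarrow> cfg \<Rightarrow> cfg" where
  "merge S i j = (\<lambda>a. if a \<in> S then i a else j a)"

definition vec_on :: "(nat \<Rightarrow> nat) \<Rightarrow> nat set \<Rightarrow> (cfg \<Rightarrow> complex) \<Rightarrow> bool" where
  "vec_on d S v \<longleftrightarrow> (\<forall>x. x \<notin> cfgs d S \<longrightarrow> v x = 0)"

definition op_on :: "(nat \<Rightarrow> nat) \<Rightarrow> nat set \<Rightarrow> qop \<Rightarrow> bool" where
  "op_on d S A \<longleftrightarrow> (\<forall>x y. x \<notin> cfgs d S \<or> y \<notin> cfgs d S \<longrightarrow> A x y = 0)"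

definition hermitian_op :: "(nat \<Rightarrow> nat) \<Rightarrow> nat set \<Rightarrow> qop \<Rightarrow> bool" where
  "hermitian_op d S A \<longleftrightarrow> op_on d S A \<and> (\<forall>x y. A y x = cnj (A x y))"

definition psd_op :: "(nat \<Rightarrow> nat) \<Rightarrow> nat set \<Rightarrow> qop \<Rightarrow> bool" where
  "psd_op d S A \<longleftrightarrow> hermitian_op d S A \<and>
     (\<forall>v. 0 \<le> Re (\<Sum>x\<in>cfgs d S. \<Sum>y\<in>cfgs d S. cnj (v x) * A x y * v y))"

definition density_op :: "(nat \<Rightarrow> nat) \<Rightarrow> nat \<Rightarrow> qop \<Rightarrow> bool" where
  "density_op d N \<rho> \<longleftrightarrow> psd_op d {..<N} \<rho> \<and> (\<Sum>x\<in>cfgs d {..<N}. \<rho> x x) = 1"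

definition ptrace :: "(nat \<Rightarrow> nat) \<Rightarrow> nat \<Rightarrow> nat set \<Rightarrow> qop \<Rightarrow> qop" where
  "ptrace d N S \<rho> = (\<lambda>i i'. if i \<in> cfgs d S \<and> i' \<in> cfgs d S
      then (\<Sum>j\<in>cfgs d ({..<N} - S). \<rho> (merge S i j) (merge S i' j)) else 0)"

text \<open>A \<otimes> I on the full space, A acting on the S-subsystem.\<close>
definition ext_op :: "(nat \<Rightarrow> nat) \<Rightarrow> nat \<Rightarrow> nat set \<Rightarrow> qop \<Rightarrow> qop" where
  "ext_op d N S A = (\<lambda>x y. if x \<in> cfgs d {..<N} \<and> y \<in> cfgs d {..<N}
      then A (restr S x) (restr S y) *
           (if restr ({..<N} - S) x = restr ({..<N} - S) y then 1 else 0)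
      else 0)"

definition apply_op :: "(nat \<Rightarrow> nat) \<Rightarrow> nat \<Rightarrow> qop \<Rightarrow> (cfg \<Rightarrow> complex) \<Rightarrow> (cfg \<Rightarrow> complex)" where
  "apply_op d N A w = (\<lambda>x. if x \<in> cfgs d {..<N} then (\<Sum>y\<in>cfgs d {..<N}. A x y * w y) else 0)"

definition supp_op :: "(nat \<Rightarrow> nat) \<Rightarrow> nat \<Rightarrow> qop \<Rightarrow> (cfg \<Rightarrow> complex) set" where
  "supp_op d N A = range (apply_op d N A)"

definition proj :: "(cfg \<Rightarrow> complex) \<Rightarrow> qop" where
  "proj \<psi> = (\<lambda>x y. \<psi> x * cnj (\<psi> y))"

definition unit_vec :: "(nat \<Rightarrow> nat) \<Rightarrow> nat \<Rightarrow> (cfg \<Rightarrow> complex) \<Rightarrow> bool" where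
  "unit_vec d N \<psi> \<longleftrightarrow> vec_on d {..<N} \<psi> \<and> (\<Sum>x\<in>cfgs d {..<N}. (cmod (\<psi> x))\<^sup>2) = 1"

definition expect :: "(nat \<Rightarrow> nat) \<Rightarrow> nat \<Rightarrow> qop \<Rightarrow> (cfg \<Rightarrow> complex) \<Rightarrow> complex" where
  "expect d N W \<phi> = (\<Sum>x\<in>cfgs d {..<N}. \<Sum>y\<in>cfgs d {..<N}. cnj (\<phi> x) * W x y * \<phi> y)"

definition neighborhood_structure :: "nat \<Rightarrow> nat set set \<Rightarrow> bool" where
  "neighborhood_structure N NS \<longleftrightarrow> finite NS \<and> (\<forall>S\<in>NS. S \<subset> {..<N})"

definition nontrivial_ns :: "nat \<Rightarrow> nat set set \<Rightarrow> bool" where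
  "nontrivial_ns N NS \<longleftrightarrow> \<Union>NS = {..<N} \<and> (\<forall>A\<in>NS. \<exists>B\<in>NS. B \<noteq> A \<and> A \<inter> B \<noteq> {})"

definition dqls :: "(nat \<Rightarrow> nat) \<Rightarrow> nat \<Rightarrow> nat set set \<Rightarrow> (cfg \<Rightarrow> complex) \<Rightarrow> (cfg \<Rightarrow> complex) set" where
  "dqls d N NS \<psi> = (\<Inter>S\<in>NS. supp_op d N (ext_op d N S (ptrace d N S (proj \<psi>))))"

definition UDA :: "(nat \<Rightarrow> nat) \<Rightarrow> nat \<Rightarrow> nat set set \<Rightarrow> qop \<Rightarrow> bool" where
  "UDA d N NS \<rho> \<longleftrightarrow> (\<forall>\<sigma>. density_op d N \<sigma> \<and> (\<forall>S\<in>NS. ptrace d N S \<sigma> = ptrace d N S \<rho>)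
      \<longrightarrow> \<sigma> = \<rho>)"

end

theory Submission
  imports Defs "HOL-Library.FuncSet"
begin

lemma finite_cfgs: assumes "finite S" shows "finite (cfgs d S)"
proof -
  have "cfgs d S \<subseteq> (\<lambda>f a. if a \<in> S then f a else 0) ` (\<Pi>\<^sub>E a\<in>S. {..<d a})"
  proof
    fix i assume i: "i \<in> cfgs d S"
    have "i = (\<lambda>a. if a \<in> S then restrict i S a else 0)"
      using i by (auto simp: cfgs_def fun_eq_iff)
    moreover have "restrict i S \<in> (\<Pi>\<^sub>E a\<in>S. {..<d a})" using i by (auto simp: cfgs_def)
    ultimately show "i \<in> (\<lambda>f a. if a \<in> S then f a else 0) ` (\<Pi>\<^sub>E a\<in>S. {..<d a})" by blast
  qed
  moreover have "finite (\<Pi>\<^sub>E a\<in>S. {..<d a})" using assms by (intro finite_PiE) auto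
  ultimately show ?thesis by (meson finite_surj)
qed

lemma sum_split:
  assumes "S \<subseteq> {..<N}"
  shows "(\<Sum>x\<in>cfgs d {..<N}. f x) = (\<Sum>i\<in>cfgs d S. \<Sum>j\<in>cfgs d ({..<N} - S). f (merge S i j))"
proof -
  have fin: "finite (cfgs d S)" "finite (cfgs d ({..<N} - S))"
    using assms by (auto intro!: finite_cfgs finite_subset[of S "{..<N}"])
  have bij: "bij_betw (\<lambda>(i,j). merge S i j) (cfgs d S \<times> cfgs d ({..<N} - S)) (cfgs d {..<N})"
  proof (rule bij_betw_byWitness[where f'="\<lambda>x. (restr S x, restr ({..<N} - S) x)"])
    show "\<forall>a\<in>cfgs d S \<times> cfgs d ({..<N} - S). (restr S ((\<lambda>(i,j). merge S i j) a), restr ({..<N} - S) ((\<lambda>(i,j). merge S i j) a)) = a"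
      by (auto simp: cfgs_def restr_def merge_def fun_eq_iff)
    show "\<forall>a'\<in>cfgs d {..<N}. (\<lambda>(i,j). merge S i j) (restr S a', restr ({..<N} - S) a') = a'"
      by (auto simp: cfgs_def restr_def merge_def fun_eq_iff)
    show "(\<lambda>(i,j). merge S i j) ` (cfgs d S \<times> cfgs d ({..<N} - S)) \<subseteq> cfgs d {..<N}"
      using assms by (auto simp: cfgs_def restr_def merge_def)
    show "(\<lambda>x. (restr S x, restr ({..<N} - S) x)) ` cfgs d {..<N} \<subseteq> cfgs d S \<times> cfgs d ({..<N} - S)"
      using assms by (auto simp: cfgs_def restr_def merge_def)
  qed
  have "(\<Sum>x\<in>cfgs d {..<N}. f x) = (\<Sum>p\<in>cfgs d S \<times> cfgs d ({..<N} - S). f ((\<lambda>(i,j). merge S i j) p))"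
    using sum.reindex_bij_betw[OF bij, of f] by simp
  also have "\<dots> = (\<Sum>i\<in>cfgs d S. \<Sum>j\<in>cfgs d ({..<N} - S). f (merge S i j))"
    by (simp add: sum.cartesian_product split_def)
  finally show ?thesis .
qed

definition ip :: "cfg set \<Rightarrow> (cfg \<Rightarrow> complex) \<Rightarrow> (cfg \<Rightarrow> complex) \<Rightarrow> complex" where
  "ip X u v = (\<Sum>x\<in>X. cnj (u x) * v x)"

lemma ip_self_zero:
  assumes "finite X" "ip X r r = 0" "x \<in> X" shows "r x = 0"
proof -
  have "(\<Sum>x\<in>X. (cmod (r x))\<^sup>2) = 0"
  proof -
    have "complex_of_real (\<Sum>x\<in>X. (cmod (r x))\<^sup>2) = ip X r r"
      unfolding ip_def of_real_sum by (rule sum.cong[OF refl]) (metis complex_norm_square mult.commute)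
    thus ?thesis using assms(2) by (metis of_real_eq_0_iff)
  qed
  hence "\<forall>x\<in>X. (cmod (r x))\<^sup>2 = 0" using assms(1) by (subst (asm) sum_nonneg_eq_0_iff) auto
  thus ?thesis using assms(3) by auto
qed

lemma decomp:
  assumes X: "finite X" and Y: "finite Y"
  shows "\<exists>c r. (\<forall>x\<in>X. w x = (\<Sum>y\<in>Y. c y * u y x) + r x) \<and> (\<forall>y\<in>Y. ip X (u y) r = 0)"
  using Y
proof (induction Y arbitrary: w rule: finite_induct)
  case empty
  show ?case by (rule exI[of _ "\<lambda>_. 0"], rule exI[of _ w]) simp
next
  case (insert y0 Y)
  obtain c1 r1 where c1: "\<forall>x\<in>X. w x = (\<Sum>y\<in>Y. c1 y * u y x) + r1 x" and r1: "\<forall>y\<in>Y. ip X (u y) r1 = 0"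
    using insert.IH by blast
  obtain c2 q where c2: "\<forall>x\<in>X. u y0 x = (\<Sum>y\<in>Y. c2 y * u y x) + q x" and q: "\<forall>y\<in>Y. ip X (u y) q = 0"
    using insert.IH by blast
  have ipsum: "ip X (\<lambda>x. (\<Sum>y\<in>Y. c y * u y x) + p x) r = (\<Sum>y\<in>Y. cnj (c y) * ip X (u y) r) + ip X p r" for c p r
    by (simp add: ip_def sum_distrib_left sum_distrib_right distrib_right sum.distrib mult.assoc)
       (subst sum.swap, simp add: mult.assoc)
  have u0: "ip X (u y0) r = ip X (\<lambda>x. (\<Sum>y\<in>Y. c2 y * u y x) + q x) r" for r
    unfolding ip_def using c2 by (intro sum.cong) auto
  show ?case
  proof (cases "ip X q q = 0")
    case True
    have q0: "\<forall>x\<in>X. q x = 0" using ip_self_zero[OF X True] by blast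
    have "ip X q r1 = 0" unfolding ip_def using q0 by simp
    hence "ip X (u y0) r1 = 0" using u0 ipsum r1 by simp
    thus ?thesis using insert c1 r1
      by (intro exI[of _ "c1(y0 := 0)"] exI[of _ r1]) (auto intro!: sum.cong)
  next
    case False
    define \<alpha> where "\<alpha> = ip X q r1 / ip X q q"
    define r where "r = (\<lambda>x. r1 x - \<alpha> * q x)"
    define c where "c = (\<lambda>y. c1 y - \<alpha> * c2 y)(y0 := \<alpha>)"
    have iplin: "ip X v r = ip X v r1 - \<alpha> * ip X v q" for v
      by (simp add: ip_def r_def sum_subtractf right_diff_distrib sum_distrib_left mult.assoc mult.left_commute)
    have o1: "\<forall>y\<in>Y. ip X (u y) r = 0" using iplin r1 q by simp
    have "ip X q r = 0" using iplin False by (simp add: \<alpha>_def)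
    hence o2: "ip X (u y0) r = 0" using u0 ipsum o1 by simp
    have eq: "w x = (\<Sum>y\<in>insert y0 Y. c y * u y x) + r x" if x: "x \<in> X" for x
    proof -
      have s: "(\<Sum>y\<in>Y. c y * u y x) = (\<Sum>y\<in>Y. c1 y * u y x) - \<alpha> * (\<Sum>y\<in>Y. c2 y * u y x)"
      proof -
        have "(\<Sum>y\<in>Y. c y * u y x) = (\<Sum>y\<in>Y. c1 y * u y x - \<alpha> * (c2 y * u y x))"
          using insert(2) by (intro sum.cong) (auto simp: c_def algebra_simps)
        thus ?thesis by (simp add: sum_subtractf sum_distrib_left)
      qed
      show ?thesis using insert(1,2) c1 c2 x s
        by (simp add: c_def r_def algebra_simps)
    qed
    show ?thesis using eq o1 o2 by blast
  qed
qed

lemma perp_perp: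
  assumes X: "finite X" and Y: "finite Y"
    and H: "\<And>v. (\<forall>y\<in>Y. ip X v (u y) = 0) \<Longrightarrow> ip X v w = 0"
  shows "\<exists>c. \<forall>x\<in>X. w x = (\<Sum>y\<in>Y. c y * u y x)"
proof -
  obtain c r where cr: "\<forall>x\<in>X. w x = (\<Sum>y\<in>Y. c y * u y x) + r x" and o: "\<forall>y\<in>Y. ip X (u y) r = 0"
    using decomp[OF X Y] by blast
  have o': "\<forall>y\<in>Y. ip X r (u y) = 0"
  proof
    fix y assume "y \<in> Y"
    hence "cnj (ip X (u y) r) = 0" using o by simp
    thus "ip X r (u y) = 0" by (simp add: ip_def mult.commute)
  qed
  have "ip X r w = 0" using H o' by blast
  moreover have "ip X r w = (\<Sum>y\<in>Y. c y * ip X r (u y)) + ip X r r"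
  proof -
    have "ip X r w = (\<Sum>x\<in>X. cnj (r x) * ((\<Sum>y\<in>Y. c y * u y x) + r x))"
      unfolding ip_def using cr by (intro sum.cong) auto
    also have "\<dots> = (\<Sum>y\<in>Y. c y * ip X r (u y)) + ip X r r"
      by (simp add: ip_def distrib_left sum.distrib sum_distrib_left)
         (subst sum.swap, simp add: algebra_simps)
    finally show ?thesis .
  qed
  ultimately have "ip X r r = 0" using o' by simp
  hence "\<forall>x\<in>X. r x = 0" using ip_self_zero[OF X] by blast
  thus ?thesis using cr by auto
qed

definition bil :: "cfg set \<Rightarrow> qop \<Rightarrow> (cfg \<Rightarrow> complex) \<Rightarrow> (cfg \<Rightarrow> complex) \<Rightarrow> complex" where
  "bil X M u v = (\<Sum>x\<in>X. \<Sum>y\<in>X. cnj (u x) * M x y * v y)"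

definition mv :: "cfg set \<Rightarrow> qop \<Rightarrow> (cfg \<Rightarrow> complex) \<Rightarrow> (cfg \<Rightarrow> complex)" where
  "mv X M v = (\<lambda>x. \<Sum>y\<in>X. M x y * v y)"

definition herm :: "qop \<Rightarrow> bool" where "herm M \<longleftrightarrow> (\<forall>x y. M y x = cnj (M x y))"

definition psdX :: "cfg set \<Rightarrow> qop \<Rightarrow> bool" where "psdX X M \<longleftrightarrow> (\<forall>v. 0 \<le> Re (bil X M v v))"

lemma bil_add_left: "bil X M (\<lambda>x. a x + c * b x) v = bil X M a v + cnj c * bil X M b v"
  by (simp add: bil_def distrib_left distrib_right sum.distrib sum_distrib_left mult.assoc)

lemma bil_add_right: "bil X M u (\<lambda>x. a x + c * b x) = bil X M u a + c * bil X M u b"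
  by (simp add: bil_def distrib_left distrib_right sum.distrib sum_distrib_left mult.assoc mult.left_commute)

lemma bil_cnj: assumes "herm M" shows "cnj (bil X M u v) = bil X M v u"
proof -
  have "cnj (bil X M u v) = (\<Sum>x\<in>X. \<Sum>y\<in>X. cnj (v y) * M y x * u x)"
  proof -
    have h: "cnj (M x y) = M y x" for x y using assms unfolding herm_def by metis
    show ?thesis by (simp add: bil_def h mult.commute mult.left_commute)
  qed
  also have "\<dots> = bil X M v u" unfolding bil_def by (rule sum.swap)
  finally show ?thesis .
qed

lemma bil_real: assumes "herm M" shows "bil X M v v = complex_of_real (Re (bil X M v v))"
proof -
  have "bil X M v v \<in> \<real>" using bil_cnj[OF assms, of X v v] by (simp add: Reals_cnj_iff)
  thus ?thesis by simp
qed

lemma bil_mv: "bil X M z v = ip X z (mv X M v)"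
  by (simp add: bil_def ip_def mv_def sum_distrib_left mult.assoc)

lemma kernel:
  assumes X: "finite X" and H: "herm M" and P: "psdX X M" and Z: "Re (bil X M v v) = 0"
  shows "\<forall>x\<in>X. mv X M v x = 0"
proof -
  define z where "z = mv X M v"
  define s where "s = Re (ip X z z)"
  define Q where "Q = Re (bil X M z z)"
  have Q0: "0 \<le> Q" using P by (simp add: psdX_def Q_def)
  have s0: "0 \<le> s" unfolding s_def ip_def by (simp add: sum_nonneg)
  have b1: "bil X M z v = ip X z z" by (simp add: bil_mv z_def)
  have b2: "bil X M v z = cnj (ip X z z)" using bil_cnj[OF H, of X z v] b1 by simp
  have ipr: "ip X z z = complex_of_real s"
  proof -
    have "cnj (ip X z z) = ip X z z" by (simp add: ip_def mult.commute)
    hence "ip X z z \<in> \<real>" by (simp add: Reals_cnj_iff)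
    thus ?thesis unfolding s_def by simp
  qed
  have key: "0 \<le> - 2 * t * s + t * t * Q" for t :: real
  proof -
    have "0 \<le> Re (bil X M (\<lambda>x. v x + complex_of_real (- t) * z x) (\<lambda>x. v x + complex_of_real (- t) * z x))"
      using P by (simp add: psdX_def)
    also have "\<dots> = Re (bil X M v v + complex_of_real (- t) * bil X M v z + cnj (complex_of_real (- t)) * bil X M z v + cnj (complex_of_real (- t)) * complex_of_real (- t) * bil X M z z)"
      unfolding bil_add_left bil_add_right by (simp only: distrib_left add.assoc mult.assoc)
    also have "\<dots> = Re (bil X M v v) - 2 * t * s + t * t * Q"
      unfolding b1 b2 ipr Q_def by simp
    finally show ?thesis using Z by simp
  qed
  have "s = 0"
  proof (rule ccontr)
    assume "s \<noteq> 0" hence sp: "s > 0" using s0 by simp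
    define t where "t = s / (Q + 1)"
    have tp: "t > 0" using sp Q0 by (simp add: t_def)
    have "Q / (Q + 1) \<le> 1" using Q0 by simp
    hence "s * (Q / (Q + 1)) \<le> s * 1" using sp by (intro mult_left_mono) auto
    hence "t * Q \<le> s" by (simp add: t_def)
    hence "t * (t * Q - 2 * s) \<le> t * (s - 2 * s)" using tp by (intro mult_left_mono) auto
    moreover have "t * (s - 2 * s) < 0" using tp sp by (simp add: mult_pos_pos)
    moreover have "0 \<le> - 2 * t * s + t * t * Q" by (rule key)
    moreover have "t * (t * Q - 2 * s) = - 2 * t * s + t * t * Q" by (simp add: algebra_simps)
    ultimately show False by linarith
  qed
  hence "ip X z z = 0" using ipr by simp
  thus ?thesis unfolding z_def[symmetric] using ip_self_zero[OF X, of z] by auto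
qed

lemma herm_cnj: "herm M \<Longrightarrow> cnj (M x y) = M y x"
  unfolding herm_def by metis

lemma ifm1: "(if P then 1 else 0) * (a::complex) = (if P then a else 0)" by simp
lemma ifm2: "(a::complex) * (if P then 1 else 0) = (if P then a else 0)" by simp
lemma ifm3: "(if P then a else 0) * (b::complex) = (if P then a * b else 0)" by simp
lemma ifs: "(\<Sum>y\<in>X. if P then f y else (0::complex)) = (if P then \<Sum>y\<in>X. f y else 0)" by simp
lemma ifc: "cnj (if P then 1 else 0) = (if P then 1 else 0)" by simp

lemma bil_delta: "x0 \<in> X \<Longrightarrow> finite X \<Longrightarrow> bil X M (\<lambda>x. if x = x0 then 1 else 0) (\<lambda>x. if x = x0 then 1 else 0) = M x0 x0"
  by (simp add: bil_def ifm1 ifm2 ifc)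

lemma bil_delta_left: "x0 \<in> X \<Longrightarrow> finite X \<Longrightarrow> bil X M (\<lambda>x. if x = x0 then 1 else 0) v = mv X M v x0"
  by (simp add: bil_def mv_def ifm1 ifm2 ifc ifm3 ifs)

lemma col_zero:
  assumes X: "finite X" and H: "herm M" and P: "psdX X M" and x: "x \<in> X" and z: "M x x = 0"
  shows "\<forall>y\<in>X. M y x = 0 \<and> M x y = 0"
proof -
  define e where "e = (\<lambda>y. if y = x then (1::complex) else 0)"
  have "Re (bil X M e e) = 0" using bil_delta[OF x X, of M] z by (simp add: e_def)
  hence k: "\<forall>y\<in>X. mv X M e y = 0" using kernel[OF X H P] by blast
  have "mv X M e y = M y x" for y using X x by (simp add: mv_def e_def ifm1 ifm2)
  hence "\<forall>y\<in>X. M y x = 0" using k by simp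
  thus ?thesis using herm_cnj[OF H] by (metis complex_cnj_zero)
qed

lemma bil_delta_right: "x0 \<in> X \<Longrightarrow> finite X \<Longrightarrow> bil X M v (\<lambda>x. if x = x0 then 1 else 0) = (\<Sum>x\<in>X. cnj (v x) * M x x0)"
  by (simp add: bil_def ifm1 ifm2 ifc ifm3 ifs)

lemma chol:
  assumes X: "finite X" and H: "herm M" and P: "psdX X M"
  shows "\<exists>(n::nat) b. (\<forall>x\<in>X. \<forall>y\<in>X. M x y = (\<Sum>k<n. b k x * cnj (b k y))) \<and> (\<forall>k<n. \<forall>x. x \<notin> X \<longrightarrow> b k x = 0)
     \<and> (\<forall>k<n. \<forall>v. (\<forall>x\<in>X. mv X M v x = 0) \<longrightarrow> ip X v (b k) = 0)"
  using H P
proof (induction "card {x\<in>X. M x x \<noteq> 0}" arbitrary: M rule: less_induct)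
  case less
  note H = less.prems(1) and P = less.prems(2)
  show ?case
  proof (cases "\<exists>x0\<in>X. M x0 x0 \<noteq> 0")
    case False
    then have "\<forall>x\<in>X. \<forall>y\<in>X. M x y = 0" using col_zero[OF X H P] by blast
    thus ?thesis apply - apply (rule exI[where x="0::nat"]) apply (rule exI[where x="\<lambda>_ _. 0"]) by simp
  next
    case True
    then obtain x0 where x0: "x0 \<in> X" "M x0 x0 \<noteq> 0" by blast
    define e where "e = (\<lambda>x. if x = x0 then (1::complex) else 0)"
    define m where "m = Re (M x0 x0)"
    have "M x0 x0 \<in> \<real>" using herm_cnj[OF H, of x0 x0] by (simp add: Reals_cnj_iff)
    hence Mr: "M x0 x0 = complex_of_real m" by (simp add: m_def)
    have "0 \<le> m" using P bil_delta[OF x0(1) X, of M] unfolding psdX_def m_def by metis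
    hence m0: "m > 0" using x0(2) Mr by (cases "m = 0") auto
    define M' where "M' = (\<lambda>x y. M x y - M x x0 * M x0 y / M x0 x0)"
    have H': "herm M'" unfolding herm_def
    proof (intro allI)
      fix x y
      have "cnj (M' x y) = M y x - M x0 x * M y x0 / M x0 x0"
        by (simp add: M'_def herm_cnj[OF H])
      thus "M' y x = cnj (M' x y)" by (simp add: M'_def mult.commute)
    qed
    have P': "psdX X M'" unfolding psdX_def
    proof
      fix v
      define g where "g = bil X M e v"
      have hg: "bil X M v e = cnj g" using bil_cnj[OF H, of X e v] by (simp add: g_def)
      define c where "c = - g / M x0 x0"
      have lhs: "bil X M' v v = bil X M v v - bil X M v e * bil X M e v / M x0 x0"
      proof -
        have "bil X M' v v = bil X M v v - (\<Sum>x\<in>X. \<Sum>y\<in>X. (cnj (v x) * M x x0) * (M x0 y * v y) / M x0 x0)"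
          by (simp add: bil_def M'_def sum_subtractf right_diff_distrib left_diff_distrib mult.assoc)
        also have "(\<Sum>x\<in>X. \<Sum>y\<in>X. (cnj (v x) * M x x0) * (M x0 y * v y) / M x0 x0)
            = (\<Sum>x\<in>X. cnj (v x) * M x x0) * (\<Sum>y\<in>X. M x0 y * v y) / M x0 x0"
          by (simp add: sum_distrib_left sum_distrib_right sum_divide_distrib, subst sum.swap, rule refl)
        also have "\<dots> = bil X M v e * bil X M e v / M x0 x0"
          using bil_delta_right[OF x0(1) X, of M v] bil_delta_left[OF x0(1) X, of M v]
          by (simp add: e_def mv_def)
        finally show ?thesis .
      qed
      have rhs: "bil X M (\<lambda>x. v x + c * e x) (\<lambda>x. v x + c * e x) = bil X M v v + c * cnj g + cnj c * g + cnj c * c * M x0 x0"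
        unfolding bil_add_left bil_add_right hg g_def[symmetric]
        using bil_delta[OF x0(1) X, of M] by (simp add: e_def algebra_simps)
      have "bil X M' v v = bil X M v v - cnj g * g / M x0 x0" using lhs hg by (simp add: g_def)
      also have "\<dots> = bil X M v v + c * cnj g + cnj c * g + cnj c * c * M x0 x0"
        using x0(2) Mr by (simp add: c_def field_simps)
      also have "\<dots> = bil X M (\<lambda>x. v x + c * e x) (\<lambda>x. v x + c * e x)" using rhs by simp
      finally have "bil X M' v v = bil X M (\<lambda>x. v x + c * e x) (\<lambda>x. v x + c * e x)" .
      thus "0 \<le> Re (bil X M' v v)" using P by (simp add: psdX_def)
    qed
    have sub: "{x\<in>X. M' x x \<noteq> 0} \<subset> {x\<in>X. M x x \<noteq> 0}"
    proof -
      have "{x\<in>X. M' x x \<noteq> 0} \<subseteq> {x\<in>X. M x x \<noteq> 0} - {x0}"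
      proof
        fix x assume xa: "x \<in> {x\<in>X. M' x x \<noteq> 0}"
        have "x \<noteq> x0" using xa x0 by (auto simp: M'_def)
        moreover have "M x x \<noteq> 0"
        proof
          assume "M x x = 0"
          hence "M x0 x = 0 \<and> M x x0 = 0" using col_zero[OF X H P, of x] xa x0(1) by auto
          thus False using xa \<open>M x x = 0\<close> by (simp add: M'_def)
        qed
        ultimately show "x \<in> {x\<in>X. M x x \<noteq> 0} - {x0}" using xa by auto
      qed
      thus ?thesis using x0 by auto
    qed
    have "card {x\<in>X. M' x x \<noteq> 0} < card {x\<in>X. M x x \<noteq> 0}"
      using sub X by (intro psubset_card_mono) auto
    from less.hyps[OF this H' P'] obtain n :: nat and b where
      rep: "\<forall>x\<in>X. \<forall>y\<in>X. M' x y = (\<Sum>k<n. b k x * cnj (b k y))" and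
      sup: "\<forall>k<n. \<forall>x. x \<notin> X \<longrightarrow> b k x = 0" and
      ker: "\<forall>k<n. \<forall>v. (\<forall>x\<in>X. mv X M' v x = 0) \<longrightarrow> ip X v (b k) = 0" by blast
    define b0 where "b0 = (\<lambda>x. if x \<in> X then M x x0 / complex_of_real (sqrt m) else 0)"
    define b' where "b' = (\<lambda>k. if k < n then b k else b0)"
    have sq: "complex_of_real (sqrt m) * complex_of_real (sqrt m) = M x0 x0"
    proof -
      have "sqrt m * sqrt m = m" using m0 by simp
      hence "complex_of_real (sqrt m * sqrt m) = M x0 x0" using Mr by simp
      thus ?thesis by (simp only: of_real_mult)
    qed
    have sq0: "complex_of_real (sqrt m) \<noteq> 0" using m0 by simp
    have r1: "\<forall>x\<in>X. \<forall>y\<in>X. M x y = (\<Sum>k<Suc n. b' k x * cnj (b' k y))"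
    proof (intro ballI)
      fix x y assume xy: "x \<in> X" "y \<in> X"
      have "(\<Sum>k<Suc n. b' k x * cnj (b' k y)) = (\<Sum>k<n. b k x * cnj (b k y)) + b0 x * cnj (b0 y)"
        by (simp add: b'_def)
      also have "\<dots> = M' x y + M x x0 * M x0 y / M x0 x0"
        using rep xy by (simp add: b0_def herm_cnj[OF H] flip: sq)
      also have "\<dots> = M x y" by (simp add: M'_def)
      finally show "M x y = (\<Sum>k<Suc n. b' k x * cnj (b' k y))" ..
    qed
    have r2: "\<forall>k<Suc n. \<forall>x. x \<notin> X \<longrightarrow> b' k x = 0" using sup by (simp add: b'_def b0_def)
    have r3: "\<forall>k<Suc n. \<forall>v. (\<forall>x\<in>X. mv X M v x = 0) \<longrightarrow> ip X v (b' k) = 0"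
    proof (intro allI impI)
      fix k v assume k: "k < Suc n" and z: "\<forall>x\<in>X. mv X M v x = 0"
      have z': "\<forall>x\<in>X. mv X M' v x = 0"
      proof
        fix x assume "x \<in> X"
        have "mv X M' v x = mv X M v x - M x x0 * mv X M v x0 / M x0 x0"
          by (simp add: mv_def M'_def sum_subtractf left_diff_distrib sum_distrib_left sum_divide_distrib mult.assoc)
        thus "mv X M' v x = 0" using z x0(1) \<open>x \<in> X\<close> by simp
      qed
      show "ip X v (b' k) = 0"
      proof (cases "k < n")
        case True thus ?thesis using ker z' by (simp add: b'_def)
      next
        case False
        have "ip X v b0 = bil X M v e / complex_of_real (sqrt m)"
          using bil_delta_right[OF x0(1) X, of M v]
          by (simp add: ip_def b0_def e_def sum_divide_distrib)
        also have "bil X M v e = cnj (mv X M v x0)"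
          using bil_cnj[OF H, of X e v] bil_delta_left[OF x0(1) X, of M v] by (simp add: e_def)
        finally show ?thesis using False z x0(1) by (simp add: b'_def)
      qed
    qed
    show ?thesis using r1 r2 r3 by blast
  qed
qed

lemma merge_in: "S \<subseteq> {..<N} \<Longrightarrow> i \<in> cfgs d S \<Longrightarrow> j \<in> cfgs d ({..<N} - S) \<Longrightarrow> merge S i j \<in> cfgs d {..<N}"
  by (auto simp: cfgs_def merge_def)
lemma restr_merge1: "i \<in> cfgs d S \<Longrightarrow> restr S (merge S i j) = i"
  by (auto simp: cfgs_def merge_def restr_def fun_eq_iff)
lemma restr_merge2: "j \<in> cfgs d ({..<N} - S) \<Longrightarrow> restr ({..<N} - S) (merge S i j) = j"
  by (auto simp: cfgs_def merge_def restr_def fun_eq_iff)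
lemma merge_restr: "x \<in> cfgs d {..<N} \<Longrightarrow> merge S (restr S x) (restr ({..<N} - S) x) = x"
  by (auto simp: cfgs_def merge_def restr_def fun_eq_iff)
lemma restr_in1: "S \<subseteq> {..<N} \<Longrightarrow> x \<in> cfgs d {..<N} \<Longrightarrow> restr S x \<in> cfgs d S"
  by (auto simp: cfgs_def restr_def)
lemma restr_in2: "x \<in> cfgs d {..<N} \<Longrightarrow> restr ({..<N} - S) x \<in> cfgs d ({..<N} - S)"
  by (auto simp: cfgs_def restr_def)

lemma ifm4: "(a::complex) * (if P then b else 0) = (if P then a * b else 0)" by simp

lemma ext_merge:
  assumes "S \<subseteq> {..<N}" "i \<in> cfgs d S" "i' \<in> cfgs d S" "j \<in> cfgs d ({..<N} - S)" "j' \<in> cfgs d ({..<N} - S)"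
  shows "ext_op d N S B (merge S i j) (merge S i' j') = (if j = j' then B i i' else 0)"
  using assms by (simp add: ext_op_def merge_in restr_merge1 restr_merge2)

lemma trace_ext:
  assumes S: "S \<subseteq> {..<N}"
  shows "(\<Sum>x\<in>cfgs d {..<N}. \<Sum>y\<in>cfgs d {..<N}. ext_op d N S B x y * M y x)
       = (\<Sum>i\<in>cfgs d S. \<Sum>i'\<in>cfgs d S. B i i' * ptrace d N S M i' i)"
proof -
  let ?C = "cfgs d S" and ?D = "cfgs d ({..<N} - S)"
  have finD: "finite ?D" by (rule finite_cfgs) simp
  have "(\<Sum>x\<in>cfgs d {..<N}. \<Sum>y\<in>cfgs d {..<N}. ext_op d N S B x y * M y x)
     = (\<Sum>i\<in>?C. \<Sum>j\<in>?D. \<Sum>i'\<in>?C. \<Sum>j'\<in>?D. ext_op d N S B (merge S i j) (merge S i' j') * M (merge S i' j') (merge S i j))"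
    by (simp only: sum_split[OF S])
  also have "\<dots> = (\<Sum>i\<in>?C. \<Sum>j\<in>?D. \<Sum>i'\<in>?C. B i i' * M (merge S i' j) (merge S i j))"
    by (rule sum.cong[OF refl], rule sum.cong[OF refl], rule sum.cong[OF refl]) (simp add: S finD ext_merge ifm3 sum.delta)
  also have "\<dots> = (\<Sum>i\<in>?C. \<Sum>i'\<in>?C. \<Sum>j\<in>?D. B i i' * M (merge S i' j) (merge S i j))"
    by (rule sum.cong[OF refl], rule sum.swap)
  also have "\<dots> = (\<Sum>i\<in>?C. \<Sum>i'\<in>?C. B i i' * ptrace d N S M i' i)"
    by (rule sum.cong[OF refl], rule sum.cong[OF refl]) (simp add: ptrace_def sum_distrib_left)
  finally show ?thesis .
qed

definition wv :: "(nat \<Rightarrow> nat) \<Rightarrow> nat \<Rightarrow> nat set \<Rightarrow> (cfg \<Rightarrow> complex) \<Rightarrow> cfg \<Rightarrow> cfg \<Rightarrow> (cfg \<Rightarrow> complex)" where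
  "wv d N S v j k = (\<lambda>x. if x \<in> cfgs d {..<N} \<and> restr ({..<N} - S) x = k then v (merge S (restr S x) j) else 0)"

lemma wv_merge:
  assumes "S \<subseteq> {..<N}" "i \<in> cfgs d S" "k1 \<in> cfgs d ({..<N} - S)"
  shows "wv d N S v j k (merge S i k1) = (if k1 = k then v (merge S i j) else 0)"
  using assms by (auto simp: wv_def merge_in restr_merge1 restr_merge2)

lemma quad_ext:
  assumes S: "S \<subseteq> {..<N}"
  shows "bil (cfgs d {..<N}) (ext_op d N S (ptrace d N S M)) v v
       = (\<Sum>j\<in>cfgs d ({..<N} - S). \<Sum>k\<in>cfgs d ({..<N} - S). bil (cfgs d {..<N}) M (wv d N S v j k) (wv d N S v j k))"
proof -
  let ?C = "cfgs d S" and ?D = "cfgs d ({..<N} - S)"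
  have finD: "finite ?D" by (rule finite_cfgs) simp
  have "bil (cfgs d {..<N}) (ext_op d N S (ptrace d N S M)) v v
     = (\<Sum>i\<in>?C. \<Sum>j\<in>?D. \<Sum>i'\<in>?C. \<Sum>j'\<in>?D. cnj (v (merge S i j)) * ext_op d N S (ptrace d N S M) (merge S i j) (merge S i' j') * v (merge S i' j'))"
    unfolding bil_def by (simp only: sum_split[OF S])
  also have "\<dots> = (\<Sum>i\<in>?C. \<Sum>j\<in>?D. \<Sum>i'\<in>?C. \<Sum>k\<in>?D. cnj (v (merge S i j)) * M (merge S i k) (merge S i' k) * v (merge S i' j))"
    by (rule sum.cong[OF refl], rule sum.cong[OF refl], rule sum.cong[OF refl]) (simp add: S finD ext_merge ifm4 ifm3 sum.delta' ptrace_def sum_distrib_left sum_distrib_right)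
  also have "\<dots> = (\<Sum>j\<in>?D. \<Sum>k\<in>?D. \<Sum>i\<in>?C. \<Sum>i'\<in>?C. cnj (v (merge S i j)) * M (merge S i k) (merge S i' k) * v (merge S i' j))"
    by (simp only: sum.swap[of _ ?D ?C])
  also have "\<dots> = (\<Sum>j\<in>?D. \<Sum>k\<in>?D. bil (cfgs d {..<N}) M (wv d N S v j k) (wv d N S v j k))"
  proof (intro sum.cong refl)
    fix j k assume j: "j \<in> ?D" and k: "k \<in> ?D"
    have "bil (cfgs d {..<N}) M (wv d N S v j k) (wv d N S v j k)
      = (\<Sum>i\<in>?C. \<Sum>k1\<in>?D. \<Sum>i'\<in>?C. \<Sum>k2\<in>?D. cnj (wv d N S v j k (merge S i k1)) * M (merge S i k1) (merge S i' k2) * wv d N S v j k (merge S i' k2))"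
      unfolding bil_def by (simp only: sum_split[OF S])
    also have "\<dots> = (\<Sum>i\<in>?C. \<Sum>i'\<in>?C. cnj (v (merge S i j)) * M (merge S i k) (merge S i' k) * v (merge S i' j))"
    proof (rule sum.cong[OF refl])
      fix i assume i: "i \<in> ?C"
      have e1: "(\<Sum>k2\<in>?D. cnj (wv d N S v j k (merge S i k1)) * M (merge S i k1) (merge S i' k2) * wv d N S v j k (merge S i' k2))
          = (if k1 = k then cnj (v (merge S i j)) * M (merge S i k) (merge S i' k) * v (merge S i' j) else 0)"
        if k1: "k1 \<in> ?D" and i': "i' \<in> ?C" for k1 i'
      proof -
        have "(\<Sum>k2\<in>?D. cnj (wv d N S v j k (merge S i k1)) * M (merge S i k1) (merge S i' k2) * wv d N S v j k (merge S i' k2))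
          = (\<Sum>k2\<in>?D. if k2 = k then cnj (wv d N S v j k (merge S i k1)) * M (merge S i k1) (merge S i' k) * v (merge S i' j) else 0)"
          using S i' by (intro sum.cong refl) (simp add: wv_merge)
        also have "\<dots> = cnj (wv d N S v j k (merge S i k1)) * M (merge S i k1) (merge S i' k) * v (merge S i' j)"
          using finD k by simp
        also have "\<dots> = (if k1 = k then cnj (v (merge S i j)) * M (merge S i k) (merge S i' k) * v (merge S i' j) else 0)"
          using S i k1 by (simp add: wv_merge)
        finally show ?thesis .
      qed
      have "(\<Sum>k1\<in>?D. \<Sum>i'\<in>?C. \<Sum>k2\<in>?D. cnj (wv d N S v j k (merge S i k1)) * M (merge S i k1) (merge S i' k2) * wv d N S v j k (merge S i' k2))
          = (\<Sum>k1\<in>?D. \<Sum>i'\<in>?C. (if k1 = k then cnj (v (merge S i j)) * M (merge S i k) (merge S i' k) * v (merge S i' j) else 0))"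
        using e1 by (intro sum.cong refl) auto
      also have "\<dots> = (\<Sum>k1\<in>?D. if k1 = k then (\<Sum>i'\<in>?C. cnj (v (merge S i j)) * M (merge S i k) (merge S i' k) * v (merge S i' j)) else 0)"
        by (simp only: ifs)
      also have "\<dots> = (\<Sum>i'\<in>?C. cnj (v (merge S i j)) * M (merge S i k) (merge S i' k) * v (merge S i' j))"
        using finD k by simp
      finally show "(\<Sum>k1\<in>?D. \<Sum>i'\<in>?C. \<Sum>k2\<in>?D. cnj (wv d N S v j k (merge S i k1)) * M (merge S i k1) (merge S i' k2) * wv d N S v j k (merge S i' k2))
          = (\<Sum>i'\<in>?C. cnj (v (merge S i j)) * M (merge S i k) (merge S i' k) * v (merge S i' j))" .
    qed
    finally show "(\<Sum>i\<in>?C. \<Sum>i'\<in>?C. cnj (v (merge S i j)) * M (merge S i k) (merge S i' k) * v (merge S i' j))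
       = bil (cfgs d {..<N}) M (wv d N S v j k) (wv d N S v j k)" by simp
  qed
  finally show ?thesis .
qed

lemma wv_sum:
  assumes S: "S \<subseteq> {..<N}" and x: "x \<in> cfgs d {..<N}"
  shows "(\<Sum>j\<in>cfgs d ({..<N} - S). wv d N S v j j x) = v x"
proof -
  have finD: "finite (cfgs d ({..<N} - S))" by (rule finite_cfgs) simp
  show ?thesis using x finD by (simp add: wv_def restr_in2 merge_restr)
qed

lemma in_range:
  assumes S: "S \<subseteq> {..<N}" and H: "herm \<sigma>" and P: "psdX (cfgs d {..<N}) \<sigma>"
    and b0: "\<forall>x. x \<notin> cfgs d {..<N} \<longrightarrow> b x = 0"
    and bk: "\<forall>v. (\<forall>x\<in>cfgs d {..<N}. mv (cfgs d {..<N}) \<sigma> v x = 0) \<longrightarrow> ip (cfgs d {..<N}) v b = 0"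
  shows "b \<in> supp_op d N (ext_op d N S (ptrace d N S \<sigma>))"
proof -
  let ?X = "cfgs d {..<N}" and ?D = "cfgs d ({..<N} - S)"
  define A where "A = ext_op d N S (ptrace d N S \<sigma>)"
  have finX: "finite ?X" by (rule finite_cfgs) simp
  have finD: "finite ?D" by (rule finite_cfgs) simp
  have "\<exists>c. \<forall>x\<in>?X. b x = (\<Sum>y\<in>?X. c y * (\<lambda>y x. A x y) y x)"
  proof (rule perp_perp[OF finX finX])
    fix v assume hv: "\<forall>y\<in>?X. ip ?X v ((\<lambda>y x. A x y) y) = 0"
    have "bil ?X A v v = (\<Sum>y\<in>?X. ip ?X v (\<lambda>x. A x y) * v y)"
      unfolding bil_def ip_def by (subst sum.swap) (simp add: sum_distrib_right)
    also have "\<dots> = 0" using hv by simp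
    finally have "bil ?X A v v = 0" .
    have s0: "(\<Sum>j\<in>?D. \<Sum>k\<in>?D. bil ?X \<sigma> (wv d N S v j k) (wv d N S v j k)) = 0"
    proof -
      have "bil ?X A v v = (\<Sum>j\<in>?D. \<Sum>k\<in>?D. bil ?X \<sigma> (wv d N S v j k) (wv d N S v j k))"
        unfolding A_def by (rule quad_ext[OF S])
      thus ?thesis using \<open>bil ?X A v v = 0\<close> by simp
    qed
    have "(\<Sum>j\<in>?D. \<Sum>k\<in>?D. Re (bil ?X \<sigma> (wv d N S v j k) (wv d N S v j k))) = 0"
      using arg_cong[OF s0, of Re] by (simp add: Re_sum)
    moreover have nn: "\<And>j k. 0 \<le> Re (bil ?X \<sigma> (wv d N S v j k) (wv d N S v j k))"
      using P by (simp add: psdX_def)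
    ultimately have "\<forall>j\<in>?D. (\<Sum>k\<in>?D. Re (bil ?X \<sigma> (wv d N S v j k) (wv d N S v j k))) = 0"
      using finD by (subst (asm) sum_nonneg_eq_0_iff) (auto intro: sum_nonneg)
    hence "\<forall>j\<in>?D. \<forall>k\<in>?D. Re (bil ?X \<sigma> (wv d N S v j k) (wv d N S v j k)) = 0"
      using finD nn by (subst (asm) sum_nonneg_eq_0_iff) auto
    hence kz: "\<forall>j\<in>?D. \<forall>x\<in>?X. mv ?X \<sigma> (wv d N S v j j) x = 0"
      using kernel[OF finX H P] by blast
    have "\<forall>x\<in>?X. mv ?X \<sigma> v x = 0"
    proof
      fix x assume x: "x \<in> ?X"
      have "mv ?X \<sigma> v x = (\<Sum>y\<in>?X. \<sigma> x y * (\<Sum>j\<in>?D. wv d N S v j j y))"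
        unfolding mv_def using wv_sum[OF S] by (intro sum.cong refl) auto
      also have "\<dots> = (\<Sum>j\<in>?D. mv ?X \<sigma> (wv d N S v j j) x)"
        unfolding mv_def by (simp add: sum_distrib_left) (rule sum.swap)
      also have "\<dots> = 0" using kz x by simp
      finally show "mv ?X \<sigma> v x = 0" .
    qed
    thus "ip ?X v b = 0" using bk by blast
  qed
  then obtain c where c: "\<forall>x\<in>?X. b x = (\<Sum>y\<in>?X. c y * A x y)" by auto
  have "b = apply_op d N A c"
  proof
    fix x show "b x = apply_op d N A c x"
      using c b0 by (cases "x \<in> ?X") (auto simp: apply_op_def mult.commute)
  qed
  thus ?thesis unfolding supp_op_def A_def by blast
qed

lemma ip_scale: "ip X v (\<lambda>x. f x / c) = ip X v f / c"
  by (simp add: ip_def sum_divide_distrib)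

lemma expect_proj: "expect d N W f = (\<Sum>x\<in>cfgs d {..<N}. \<Sum>y\<in>cfgs d {..<N}. W x y * proj f y x)"
  unfolding expect_def proj_def by (intro sum.cong refl) (simp add: mult_ac)

lemma expect_scale: "expect d N W (\<lambda>x. c * f x) = cnj c * c * expect d N W f"
  unfolding expect_def by (simp add: sum_distrib_left mult_ac)

lemma traceW:
  assumes ns: "\<forall>S\<in>NS. S \<subseteq> {..<N}"
  shows "(\<Sum>x\<in>cfgs d {..<N}. \<Sum>y\<in>cfgs d {..<N}. (\<Sum>S\<in>NS. ext_op d N S (Wloc S) x y) * M y x)
    = (\<Sum>S\<in>NS. \<Sum>i\<in>cfgs d S. \<Sum>i'\<in>cfgs d S. Wloc S i i' * ptrace d N S M i' i)"
proof -
  have "(\<Sum>x\<in>cfgs d {..<N}. \<Sum>y\<in>cfgs d {..<N}. (\<Sum>S\<in>NS. ext_op d N S (Wloc S) x y) * M y x)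
     = (\<Sum>x\<in>cfgs d {..<N}. \<Sum>y\<in>cfgs d {..<N}. \<Sum>S\<in>NS. ext_op d N S (Wloc S) x y * M y x)"
    by (simp add: sum_distrib_right)
  also have "\<dots> = (\<Sum>x\<in>cfgs d {..<N}. \<Sum>S\<in>NS. \<Sum>y\<in>cfgs d {..<N}. ext_op d N S (Wloc S) x y * M y x)"
    by (rule sum.cong[OF refl], rule sum.swap)
  also have "\<dots> = (\<Sum>S\<in>NS. \<Sum>x\<in>cfgs d {..<N}. \<Sum>y\<in>cfgs d {..<N}. ext_op d N S (Wloc S) x y * M y x)"
    by (rule sum.swap)
  also have "\<dots> = (\<Sum>S\<in>NS. \<Sum>i\<in>cfgs d S. \<Sum>i'\<in>cfgs d S. Wloc S i i' * ptrace d N S M i' i)"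
    by (rule sum.cong[OF refl]) (simp add: trace_ext ns)
  finally show ?thesis .
qed

theorem mainTheorem3:
  fixes d :: "nat \<Rightarrow> nat" and N :: nat and NS :: "nat set set"
    and \<psi> :: "cfg \<Rightarrow> complex" and W :: qop and Wloc :: "nat set \<Rightarrow> qop"
  assumes dims: "\<forall>a<N. 0 < d a"
    and psi: "unit_vec d N \<psi>"
    and ns: "neighborhood_structure N NS"
    and nt: "nontrivial_ns N NS"
    and Wloc: "\<forall>S\<in>NS. op_on d S (Wloc S)"
    and Wdef: "W = (\<lambda>x y. \<Sum>S\<in>NS. ext_op d N S (Wloc S) x y)"
    and Wherm: "hermitian_op d {..<N} W"
    and gap: "\<forall>\<phi>. unit_vec d N \<phi> \<and> \<phi> \<in> dqls d N NS \<psi> \<and> proj \<phi> \<noteq> proj \<psi>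
                 \<longrightarrow> Re (expect d N W \<psi>) < Re (expect d N W \<phi>)"
  shows "UDA d N NS (proj \<psi>)"
  unfolding UDA_def
proof (intro allI impI)
  fix \<sigma> assume asm: "density_op d N \<sigma> \<and> (\<forall>S\<in>NS. ptrace d N S \<sigma> = ptrace d N S (proj \<psi>))"
  let ?X = "cfgs d {..<N}"
  have finX: "finite ?X" by (rule finite_cfgs) simp
  have nsS: "\<forall>S\<in>NS. S \<subseteq> {..<N}" using ns by (auto simp: neighborhood_structure_def)
  have marg: "\<forall>S\<in>NS. ptrace d N S \<sigma> = ptrace d N S (proj \<psi>)" using asm by blast
  have Hop: "hermitian_op d {..<N} \<sigma>" using asm unfolding density_op_def psd_op_def by blast
  have H: "herm \<sigma>" using Hop unfolding hermitian_op_def herm_def by blast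
  have P: "psdX ?X \<sigma>" using asm unfolding density_op_def psd_op_def psdX_def bil_def by blast
  have opon: "\<forall>x y. x \<notin> ?X \<or> y \<notin> ?X \<longrightarrow> \<sigma> x y = 0"
    using Hop unfolding hermitian_op_def op_on_def by blast
  have tr1: "(\<Sum>x\<in>?X. \<sigma> x x) = 1" using asm by (simp add: density_op_def)
  have psi0: "\<forall>x. x \<notin> ?X \<longrightarrow> \<psi> x = 0" using psi by (simp add: unit_vec_def vec_on_def)
  have psin: "(\<Sum>x\<in>?X. (cmod (\<psi> x))\<^sup>2) = 1" using psi by (simp add: unit_vec_def)
  obtain n :: nat and b where
      rep: "\<forall>x\<in>?X. \<forall>y\<in>?X. \<sigma> x y = (\<Sum>k<n. b k x * cnj (b k y))" and
      sup: "\<forall>k<n. \<forall>x. x \<notin> ?X \<longrightarrow> b k x = 0" and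
      ker: "\<forall>k<n. \<forall>v. (\<forall>x\<in>?X. mv ?X \<sigma> v x = 0) \<longrightarrow> ip ?X v (b k) = 0"
    using chol[OF finX H P] by blast
  have indq: "u \<in> dqls d N NS \<psi>"
    if u0: "\<forall>x. x \<notin> ?X \<longrightarrow> u x = 0" and uk: "\<forall>v. (\<forall>x\<in>?X. mv ?X \<sigma> v x = 0) \<longrightarrow> ip ?X v u = 0" for u
    unfolding dqls_def
  proof
    fix S assume S: "S \<in> NS"
    have "u \<in> supp_op d N (ext_op d N S (ptrace d N S \<sigma>))"
      using in_range[OF _ H P u0 uk] nsS S by blast
    thus "u \<in> supp_op d N (ext_op d N S (ptrace d N S (proj \<psi>)))" using marg S by simp
  qed
  define E where "E = Re (expect d N W \<psi>)"
  define nb where "nb = (\<lambda>k. \<Sum>x\<in>?X. (cmod (b k x))\<^sup>2)"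
  define tm where "tm = (\<lambda>k. Re (expect d N W (b k)) - E * nb k)"
  have claim: "0 \<le> tm k \<and> (tm k = 0 \<longrightarrow> (\<forall>x y. proj (b k) x y = complex_of_real (nb k) * proj \<psi> x y))"
    if k: "k < n" for k
  proof (cases "nb k = 0")
    case True
    have "\<forall>x\<in>?X. (cmod (b k x))\<^sup>2 = 0" using True finX unfolding nb_def
      by (subst (asm) sum_nonneg_eq_0_iff) auto
    hence "b k = (\<lambda>_. 0)" using sup k by (auto simp: fun_eq_iff)
    thus ?thesis using True by (simp add: tm_def expect_def proj_def)
  next
    case False
    have nbp: "nb k > 0" using False unfolding nb_def by (metis order_le_neq_trans sum_nonneg zero_le_power2)
    define s where "s = sqrt (nb k)"
    have sp: "s > 0" using nbp by (simp add: s_def)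
    have ss: "s * s = nb k" using nbp by (simp add: s_def)
    define \<phi> where "\<phi> = (\<lambda>x. b k x / complex_of_real s)"
    have bphi: "b k = (\<lambda>x. complex_of_real s * \<phi> x)" using sp by (simp add: \<phi>_def fun_eq_iff)
    have u1: "unit_vec d N \<phi>"
    proof -
      have "(\<Sum>x\<in>?X. (cmod (\<phi> x))\<^sup>2) = (\<Sum>x\<in>?X. (cmod (b k x))\<^sup>2) / (s * s)"
        by (simp add: \<phi>_def norm_divide power_divide sum_divide_distrib power2_eq_square)
      also have "\<dots> = 1" using ss nbp by (simp add: nb_def)
      finally show ?thesis using sup k by (simp add: unit_vec_def vec_on_def \<phi>_def)
    qed
    have d1: "\<phi> \<in> dqls d N NS \<psi>"
    proof (rule indq)
      show "\<forall>x. x \<notin> ?X \<longrightarrow> \<phi> x = 0" using sup k by (simp add: \<phi>_def)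
      show "\<forall>v. (\<forall>x\<in>?X. mv ?X \<sigma> v x = 0) \<longrightarrow> ip ?X v \<phi> = 0"
        using ker k by (simp add: \<phi>_def ip_scale)
    qed
    have eb: "expect d N W (b k) = complex_of_real (nb k) * expect d N W \<phi>"
      unfolding bphi expect_scale using ss by (simp flip: of_real_mult)
    have pb: "proj (b k) x y = complex_of_real (nb k) * proj \<phi> x y" for x y
      unfolding bphi proj_def using ss by (simp add: mult_ac flip: of_real_mult)
    show ?thesis
    proof (cases "proj \<phi> = proj \<psi>")
      case True
      have "expect d N W \<phi> = expect d N W \<psi>" unfolding expect_proj True ..
      thus ?thesis using pb True eb by (simp add: tm_def E_def)
    next
      case False
      hence "E < Re (expect d N W \<phi>)" using gap u1 d1 by (simp add: E_def)
      hence "E * nb k < Re (expect d N W \<phi>) * nb k" using nbp by simp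
      hence "tm k > 0" using eb by (simp add: tm_def mult.commute)
      thus ?thesis by simp
    qed
  qed
    have e2: "(\<Sum>k<n. nb k) = 1"
    proof -
      have "complex_of_real (\<Sum>k<n. nb k) = (\<Sum>x\<in>?X. \<sigma> x x)"
      proof -
        have "complex_of_real (\<Sum>k<n. nb k) = (\<Sum>x\<in>?X. \<Sum>k<n. complex_of_real ((cmod (b k x))\<^sup>2))"
          unfolding nb_def of_real_sum by (rule sum.swap)
        also have "\<dots> = (\<Sum>x\<in>?X. \<sigma> x x)"
        proof (rule sum.cong[OF refl])
          fix x assume x: "x \<in> ?X"
          have "(\<Sum>k<n. complex_of_real ((cmod (b k x))\<^sup>2)) = (\<Sum>k<n. b k x * cnj (b k x))"
            by (rule sum.cong[OF refl]) (rule complex_norm_square)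
          thus "(\<Sum>k<n. complex_of_real ((cmod (b k x))\<^sup>2)) = \<sigma> x x" using rep x by simp
        qed
        finally show ?thesis .
      qed
      thus ?thesis using tr1 by (metis of_real_eq_1_iff)
    qed
  have sumtr: "(\<Sum>k<n. tm k) = 0"
  proof -
    have e1: "(\<Sum>k<n. expect d N W (b k)) = expect d N W \<psi>"
    proof -
      have "(\<Sum>k<n. expect d N W (b k)) = (\<Sum>x\<in>?X. \<Sum>y\<in>?X. W x y * \<sigma> y x)"
      proof -
        have "(\<Sum>k<n. expect d N W (b k)) = (\<Sum>k<n. \<Sum>x\<in>?X. \<Sum>y\<in>?X. W x y * proj (b k) y x)"
          by (simp add: expect_proj)
        also have "\<dots> = (\<Sum>x\<in>?X. \<Sum>y\<in>?X. \<Sum>k<n. W x y * proj (b k) y x)"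
          by (subst sum.swap, rule sum.cong[OF refl], rule sum.swap)
        also have "\<dots> = (\<Sum>x\<in>?X. \<Sum>y\<in>?X. W x y * \<sigma> y x)"
          using rep by (intro sum.cong refl) (simp add: proj_def sum_distrib_left)
        finally show ?thesis .
      qed
      also have "\<dots> = (\<Sum>x\<in>?X. \<Sum>y\<in>?X. W x y * proj \<psi> y x)"
        unfolding Wdef traceW[OF nsS] using marg by simp
      also have "\<dots> = expect d N W \<psi>" by (simp add: expect_proj)
      finally show ?thesis .
    qed
    have "(\<Sum>k<n. tm k) = Re (\<Sum>k<n. expect d N W (b k)) - E * (\<Sum>k<n. nb k)"
      by (simp add: tm_def sum_subtractf sum_distrib_left Re_sum)
    also have "\<dots> = 0" using e1 e2 by (simp add: E_def)
    finally show ?thesis .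
  qed
  have allz: "\<forall>k<n. tm k = 0"
    using sumtr claim by (subst (asm) sum_nonneg_eq_0_iff) auto
  show "\<sigma> = proj \<psi>"
  proof (intro ext)
    fix x y
    show "\<sigma> x y = proj \<psi> x y"
    proof (cases "x \<in> ?X \<and> y \<in> ?X")
      case True
      have "\<sigma> x y = (\<Sum>k<n. proj (b k) x y)" using rep True by (simp add: proj_def)
      also have "\<dots> = (\<Sum>k<n. complex_of_real (nb k) * proj \<psi> x y)"
        using claim allz by (intro sum.cong refl) auto
      also have "\<dots> = proj \<psi> x y" using e2 by (simp flip: sum_distrib_right of_real_sum)
      finally show ?thesis .
    next
      case False
      thus ?thesis using opon psi0 by (auto simp: proj_def)
    qed
  qed
qed

end
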